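(* Let $n,m,\ell\in\mathbb{N}_0$, let $U_{\mathrm{pos}}\subset\mathbb{R}^n$ be open, let $A:U_{\mathrm{pos}}\to\mathbb{R}^{\ell\times n}$ and $B:U_{\mathrm{pos}}\to\mathbb{R}^{n\times m}$ be continuous, and assume that $A$ has constant rank on $U_{\mathrm{pos}}$. For $\bm{r}\in U_{\mathrm{pos}}$ let $\mathcal{D}_{\bm{r}}\subset\mathbb{R}^{3n+m}\times\mathbb{R}^{3n+m}$ be the set of all pairs of a flow $f=(\bm{v}_{\mathcal{L},f},\bm{F}_{\mathcal{L},f},\bm{v}_{\mathcal{R}},\bm{v}_{\mathrm{ext}})\in\mathbb{R}^n\times\mathbb{R}^n\times\mathbb{R}^n\times\mathbb{R}^m$ and an effort $e=(\bm{F}_{\mathcal{L},e},\bm{v}_{\mathcal{L},e},\bm{F}_{\mathcal{R}},\bm{F}_{\mathrm{ext}})\in\mathbb{R}^n\times\mathbb{R}^n\times\mathbb{R}^n\times\mathbb{R}^m$ such that $\bm{v}_{\mathcal{L},f}=\bm{v}_{\mathcal{L},e}=\bm{v}_{\mathcal{R}}$, $A(\bm{r})\bm{v}_{\mathcal{L},e}=0$, $\bm{v}_{\mathrm{ext}}=B(\bm{r})^\top\bm{v}_{\mathcal{L},e}$, and there exists $\bm{\mu}\in\mathbb{R}^\ell$ with $\bm{F}_{\mathcal{L},f}+\bm{F}_{\mathcal{L},e}+\bm{F}_{\mathcal{R}}+B(\bm{r})\bm{F}_{\mathrm{ext}}+A(\bm{r})^\top\bm{\mu}=0$. Then the family $(\mathcal{D}_{\bm{r}})_{\bm{r}\in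 U_{\mathrm{pos}}}$ is a modulated Dirac structure.
   Context: A subspace $\mathcal{D}\subset\mathbb{R}^N\times\mathbb{R}^N$ is a Dirac structure if for all $f,e\in\mathbb{R}^N$: $(f,e)\in\mathcal{D}$ if and only if $\hat f^\top e+f^\top\hat e=0$ for all $(\hat f,\hat e)\in\mathcal{D}$. For $U\subset\mathbb{R}^k$ open, a family $(\mathcal{D}_x)_{x\in U}$ of subspaces of $\mathbb{R}^N\times\mathbb{R}^N$ is a modulated Dirac structure if for every $x\in U$: (a) $\mathcal{D}_x$ is a Dirac structure, and (b) there exist a neighborhood $U_x\subset U$ of $x$ and a family $(T_y)_{y\in U_x}$ of linear bijective maps $T_y:\mathbb{R}^N\to\mathcal{D}_y$ such that for every $z\in\mathbb{R}^N$ the map $y\mapsto T_yz$ from $U_x$ to $\mathbb{R}^N\times\mathbb{R}^N$ is continuous. *)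

theory Defs
  imports "HOL-Analysis.Analysis" "HOL-Library.Function_Algebras"
begin

text \<open>A vector of R^N is a function nat => real vanishing at all
indices >= N; a (nr x nc)-matrix is a function nat => nat => real, of which
only the entries M i j with i < nr, j < nc are used. Topologies: the product
topology on nat => real (Function_Topology), restricted to R^N; on R^N this is
the Euclidean topology.\<close>

definition rvec :: "nat \<Rightarrow> (nat \<Rightarrow> real) set" where
  "rvec N = {x. \<forall>i\<ge>N. x i = 0}"

definition ip :: "nat \<Rightarrow> (nat \<Rightarrow> real) \<Rightarrow> (nat \<Rightarrow> real) \<Rightarrow> real" where
  "ip N x y = (\<Sum>i<N. x i * y i)"

definition mv :: "nat \<Rightarrow> nat \<Rightarrow> (nat \<Rightarrow> nat \<Rightarrow> real) \<Rightarrow> (nat \<Rightarrow> real) \<Rightarrow> (nat \<Rightarrow> real)" where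
  "mv nr nc M x = (\<lambda>i. if i < nr then (\<Sum>j<nc. M i j * x j) else 0)"

definition mtrans :: "(nat \<Rightarrow> nat \<Rightarrow> real) \<Rightarrow> (nat \<Rightarrow> nat \<Rightarrow> real)" where
  "mtrans M = (\<lambda>i j. M j i)"

definition fscale :: "real \<Rightarrow> (nat \<Rightarrow> real) \<Rightarrow> (nat \<Rightarrow> real)" where
  "fscale c x = (\<lambda>i. c * x i)"

definition mat_rank :: "nat \<Rightarrow> nat \<Rightarrow> (nat \<Rightarrow> nat \<Rightarrow> real) \<Rightarrow> nat" where
  "mat_rank nr nc M =
     vector_space.dim fscale ((\<lambda>j. \<lambda>i. if i < nr then M i j else 0) ` {..<nc})"

definition blk :: "nat \<Rightarrow> nat \<Rightarrow> (nat \<Rightarrow> real) \<Rightarrow> (nat \<Rightarrow> real)" where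
  "blk off len x = (\<lambda>i. if i < len then x (off + i) else 0)"

definition dirac :: "nat \<Rightarrow> ((nat \<Rightarrow> real) \<times> (nat \<Rightarrow> real)) set \<Rightarrow> bool" where
  "dirac N D \<longleftrightarrow>
     D \<subseteq> rvec N \<times> rvec N \<and>
     (0, 0) \<in> D \<and>
     (\<forall>(f, e)\<in>D. \<forall>(f', e')\<in>D. (\<lambda>i. f i + f' i, \<lambda>i. e i + e' i) \<in> D) \<and>
     (\<forall>(f, e)\<in>D. \<forall>c::real. (\<lambda>i. c * f i, \<lambda>i. c * e i) \<in> D) \<and>
     (\<forall>f\<in>rvec N. \<forall>e\<in>rvec N.
        (f, e) \<in> D \<longleftrightarrow> (\<forall>(fh, eh)\<in>D. ip N fh e + ip N f eh = 0))"

definition lin_bij_onto :: "nat \<Rightarrow> ((nat \<Rightarrow> real) \<Rightarrow> (nat \<Rightarrow> real) \<times> (nat \<Rightarrow> real))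
     \<Rightarrow> ((nat \<Rightarrow> real) \<times> (nat \<Rightarrow> real)) set \<Rightarrow> bool" where
  "lin_bij_onto N T D \<longleftrightarrow>
     (\<forall>x\<in>rvec N. \<forall>y\<in>rvec N. T (\<lambda>i. x i + y i) =
        (\<lambda>i. fst (T x) i + fst (T y) i, \<lambda>i. snd (T x) i + snd (T y) i)) \<and>
     (\<forall>x\<in>rvec N. \<forall>c::real. T (\<lambda>i. c * x i) =
        (\<lambda>i. c * fst (T x) i, \<lambda>i. c * snd (T x) i)) \<and>
     bij_betw T (rvec N) D"

definition modulated_dirac :: "nat \<Rightarrow> nat \<Rightarrow> (nat \<Rightarrow> real) set
     \<Rightarrow> ((nat \<Rightarrow> real) \<Rightarrow> ((nat \<Rightarrow> real) \<times> (nat \<Rightarrow> real)) set) \<Rightarrow> bool" where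
  "modulated_dirac k N U D \<longleftrightarrow>
     (\<forall>x\<in>U. dirac N (D x) \<and>
        (\<exists>Ux T. openin (top_of_set (rvec k)) Ux \<and> x \<in> Ux \<and> Ux \<subseteq> U \<and>
           (\<forall>y\<in>Ux. lin_bij_onto N (T y) (D y)) \<and>
           (\<forall>z\<in>rvec N. continuous_on Ux (\<lambda>y. T y z))))"

definition Dpos :: "nat \<Rightarrow> nat \<Rightarrow> nat \<Rightarrow> ((nat \<Rightarrow> real) \<Rightarrow> nat \<Rightarrow> nat \<Rightarrow> real)
     \<Rightarrow> ((nat \<Rightarrow> real) \<Rightarrow> nat \<Rightarrow> nat \<Rightarrow> real) \<Rightarrow> (nat \<Rightarrow> real)
     \<Rightarrow> ((nat \<Rightarrow> real) \<times> (nat \<Rightarrow> real)) set" where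
  "Dpos n m l A B r = {(f, e). f \<in> rvec (3*n+m) \<and> e \<in> rvec (3*n+m) \<and>
     (let vLf = blk 0 n f; FLf = blk n n f; vR = blk (2*n) n f; vext = blk (3*n) m f;
          FLe = blk 0 n e; vLe = blk n n e; FR = blk (2*n) n e; Fext = blk (3*n) m e
      in vLf = vLe \<and> vLe = vR \<and>
         mv l n (A r) vLe = (\<lambda>_. 0) \<and>
         vext = mv m n (mtrans (B r)) vLe \<and>
         (\<exists>\<mu>\<in>rvec l. (\<lambda>i. FLf i + FLe i + FR i + mv n m (B r) Fext i
                             + mv n l (mtrans (A r)) \<mu> i) = (\<lambda>_. 0)))}"

end

theory Submission
  imports Defs "Jordan_Normal_Form.Determinant"
begin

lemma sum_split_add: "(\<Sum>i<a+b. f i) = (\<Sum>i<a. f i) + (\<Sum>i<b. f (a+i))" for f :: "nat \<Rightarrow> real"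
  by (induction b) (auto simp: add.assoc)

definition cat4 :: "nat \<Rightarrow> nat \<Rightarrow> (nat \<Rightarrow> real) \<Rightarrow> (nat \<Rightarrow> real) \<Rightarrow> (nat \<Rightarrow> real) \<Rightarrow> (nat \<Rightarrow> real) \<Rightarrow> nat \<Rightarrow> real" where
  "cat4 n m a b c d = (\<lambda>i. if i < n then a i else if i < 2*n then b (i - n) else
     if i < 3*n then c (i - 2*n) else if i < 3*n+m then d (i - 3*n) else 0)"

lemma rvecI: "(\<And>i. i \<ge> N \<Longrightarrow> x i = 0) \<Longrightarrow> x \<in> rvec N" by (auto simp: rvec_def)
lemma rvecD: "x \<in> rvec N \<Longrightarrow> i \<ge> N \<Longrightarrow> x i = 0" by (auto simp: rvec_def)

lemma cat4_rvec: "cat4 n m a b c d \<in> rvec (3*n+m)"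
  by (auto simp: rvec_def cat4_def)

lemma blk_rvec: "blk off len x \<in> rvec len" by (auto simp: rvec_def blk_def)

lemma blk_cat4:
  assumes "a \<in> rvec n" "b \<in> rvec n" "c \<in> rvec n" "d \<in> rvec m"
  shows "blk 0 n (cat4 n m a b c d) = a" "blk n n (cat4 n m a b c d) = b"
    "blk (2*n) n (cat4 n m a b c d) = c" "blk (3*n) m (cat4 n m a b c d) = d"
  using assms by (auto simp: fun_eq_iff blk_def cat4_def rvec_def)

lemma cat4_blk:
  assumes "f \<in> rvec (3*n+m)"
  shows "cat4 n m (blk 0 n f) (blk n n f) (blk (2*n) n f) (blk (3*n) m f) = f"
  using assms by (auto simp: fun_eq_iff blk_def cat4_def rvec_def)

lemma ip_blocks:
  "ip (3*n+m) f e = ip n (blk 0 n f) (blk 0 n e) + ip n (blk n n f) (blk n n e)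
     + ip n (blk (2*n) n f) (blk (2*n) n e) + ip m (blk (3*n) m f) (blk (3*n) m e)"
proof -
  have e: "3*n+m = n + (n + (n + m))" by simp
  show ?thesis unfolding ip_def e sum_split_add
    by (simp add: blk_def add.assoc mult_2 mult_2_right numeral_3_eq_3 algebra_simps)
qed

lemma ip_cat4:
  assumes "a \<in> rvec n" "b \<in> rvec n" "c \<in> rvec n" "d \<in> rvec m"
   "a' \<in> rvec n" "b' \<in> rvec n" "c' \<in> rvec n" "d' \<in> rvec m"
  shows "ip (3*n+m) (cat4 n m a b c d) (cat4 n m a' b' c' d') = ip n a a' + ip n b b' + ip n c c' + ip m d d'"
  using ip_blocks[of n m "cat4 n m a b c d" "cat4 n m a' b' c' d'"] assms by (simp add: blk_cat4)

lemma mv_rvec: "mv nr nc M x \<in> rvec nr" by (auto simp: rvec_def mv_def)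

lemma ip_mtrans: "ip nc (mv nc nr (mtrans M) v) c = ip nr v (mv nr nc M c)"
  unfolding ip_def mv_def mtrans_def
  by (simp add: sum_distrib_left sum_distrib_right mult.assoc mult.left_commute sum.swap[of _ "{..<nc}"])

lemma ip_sym: "ip N x y = ip N y x" by (simp add: ip_def mult.commute)

lemma ip_mtrans2: "ip nc c (mv nc nr (mtrans M) v) = ip nr v (mv nr nc M c)"
  by (metis ip_sym ip_mtrans)

lemma ip_self_zero: assumes "x \<in> rvec N" "ip N x x = 0" shows "x = (\<lambda>_. 0)"
proof -
  have "\<forall>i\<in>{..<N}. x i * x i = 0"
    using assms(2) unfolding ip_def by (subst (asm) sum_nonneg_eq_0_iff) auto
  then show ?thesis using assms(1) unfolding fun_eq_iff by (metis lessThan_iff mult_eq_0_iff not_le rvecD)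
qed

lemma ip_diff_left: "ip N (\<lambda>i. x i - y i) z = ip N x z - ip N y z"
  by (simp add: ip_def algebra_simps sum_subtractf)

lemma ip_eq_from: assumes "x \<in> rvec N" "y \<in> rvec N" "ip N (\<lambda>i. x i - y i) (\<lambda>i. x i - y i) = 0"
  shows "x = y"
proof -
  have "(\<lambda>i. x i - y i) = (\<lambda>_. 0)" by (rule ip_self_zero) (use assms in \<open>auto simp: rvec_def\<close>)
  then show ?thesis by (auto simp: fun_eq_iff dest: fun_cong)
qed

lemma Dpos_cat4:
  assumes "a \<in> rvec n" "b \<in> rvec n" "c \<in> rvec n" "d \<in> rvec m"
   "a' \<in> rvec n" "b' \<in> rvec n" "c' \<in> rvec n" "d' \<in> rvec m"
  shows "(cat4 n m a b c d, cat4 n m a' b' c' d') \<in> Dpos n m l A B r \<longleftrightarrow>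
    a = b' \<and> b' = c \<and> mv l n (A r) b' = (\<lambda>_. 0) \<and> d = mv m n (mtrans (B r)) b' \<and>
    (\<exists>\<mu>\<in>rvec l. (\<lambda>i. b i + a' i + c' i + mv n m (B r) d' i + mv n l (mtrans (A r)) \<mu> i) = (\<lambda>_. 0))"
  using assms by (simp add: Dpos_def Let_def blk_cat4 cat4_rvec)

lemma Dpos_blocks:
  assumes "(f, e) \<in> Dpos n m l A B r"
  shows "f \<in> rvec (3*n+m)" "e \<in> rvec (3*n+m)"
    "f = cat4 n m (blk 0 n f) (blk n n f) (blk (2*n) n f) (blk (3*n) m f)"
    "e = cat4 n m (blk 0 n e) (blk n n e) (blk (2*n) n e) (blk (3*n) m e)"
  using assms by (auto simp: Dpos_def cat4_blk)

lemma blk_add: "blk off len (\<lambda>i. x i + y i) = (\<lambda>i. blk off len x i + blk off len y i)"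
  by (auto simp: blk_def fun_eq_iff)
lemma blk_scale: "blk off len (\<lambda>i. c * x i) = (\<lambda>i. c * blk off len x i)"
  by (auto simp: blk_def fun_eq_iff)
lemma mv_add: "mv a b M (\<lambda>i. x i + y i) = (\<lambda>i. mv a b M x i + mv a b M y i)"
  by (auto simp: mv_def fun_eq_iff sum.distrib algebra_simps)
lemma mv_scale: "mv a b M (\<lambda>i. c * x i) = (\<lambda>i. c * mv a b M x i)"
  by (auto simp: mv_def fun_eq_iff sum_distrib_left algebra_simps)
lemma mv_neg: "mv a b M (\<lambda>i. - x i) = (\<lambda>i. - mv a b M x i)"
  using mv_scale[of a b M "-1" x] by simp
lemma mv_zero: "mv a b M (\<lambda>_. 0) = (\<lambda>_. 0)"
  by (auto simp: mv_def fun_eq_iff)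
lemma ip_zero_left[simp]: "ip N (\<lambda>_. 0) x = 0" and ip_zero_right[simp]: "ip N x (\<lambda>_. 0) = 0"
  by (auto simp: ip_def)
lemma ip_neg_right: "ip N x (\<lambda>i. - y i) = - ip N x y"
  by (simp add: ip_def sum_negf)
lemma ip_neg_left: "ip N (\<lambda>i. - y i) x = - ip N y x"
  by (simp add: ip_def sum_negf)
lemma ip_diff_right: "ip N x (\<lambda>i. y i - z i) = ip N x y - ip N x z"
  by (simp add: ip_def algebra_simps sum_subtractf)

lemma ip_orth:
  assumes "(\<lambda>i. a i + b i + c i + d i + mv n l (mtrans M) \<mu> i) = (\<lambda>_. 0)" "mv l n M v = (\<lambda>_. 0)"
  shows "ip n v a + ip n v b + ip n v c + ip n v d = 0"
proof -
  have e: "a i + b i + c i + d i = - mv n l (mtrans M) \<mu> i" for i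
    using fun_cong[OF assms(1), of i] by simp
  have "ip n v a + ip n v b + ip n v c + ip n v d = ip n v (\<lambda>i. a i + b i + c i + d i)"
    by (simp add: ip_def sum.distrib algebra_simps)
  also have "\<dots> = - ip n (mv n l (mtrans M) \<mu>) v" by (simp add: e ip_neg_right ip_sym)
  also have "\<dots> = 0" by (simp add: ip_mtrans assms(2))
  finally show ?thesis .
qed

lemma rvec_neg: "x \<in> rvec N \<Longrightarrow> (\<lambda>i. - x i) \<in> rvec N" by (auto simp: rvec_def)
lemma rvec_diff: "x \<in> rvec N \<Longrightarrow> y \<in> rvec N \<Longrightarrow> (\<lambda>i. x i - y i) \<in> rvec N" by (auto simp: rvec_def)
lemma rvec_add: "x \<in> rvec N \<Longrightarrow> y \<in> rvec N \<Longrightarrow> (\<lambda>i. x i + y i) \<in> rvec N" by (auto simp: rvec_def)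
lemma rvec_scale: "x \<in> rvec N \<Longrightarrow> (\<lambda>i. c * x i) \<in> rvec N" by (auto simp: rvec_def)
lemma rvec_zero: "(\<lambda>_. 0) \<in> rvec N" by (auto simp: rvec_def)

lemma Dpos_mem_E:
  assumes "(f, e) \<in> Dpos n m l A B r"
  obtains a b c d a' b' c' d' \<mu> where
    "a \<in> rvec n" "b \<in> rvec n" "c \<in> rvec n" "d \<in> rvec m"
    "a' \<in> rvec n" "b' \<in> rvec n" "c' \<in> rvec n" "d' \<in> rvec m"
    "f = cat4 n m a b c d" "e = cat4 n m a' b' c' d'"
    "a = b'" "b' = c" "mv l n (A r) b' = (\<lambda>_. 0)" "d = mv m n (mtrans (B r)) b'"
    "\<mu> \<in> rvec l" "(\<lambda>i. b i + a' i + c' i + mv n m (B r) d' i + mv n l (mtrans (A r)) \<mu> i) = (\<lambda>_. 0)"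
proof -
  note bl = Dpos_blocks[OF assms]
  from assms obtain \<mu> where c: "blk 0 n f = blk n n e" "blk n n e = blk (2*n) n f"
     "mv l n (A r) (blk n n e) = (\<lambda>_. 0)" "blk (3*n) m f = mv m n (mtrans (B r)) (blk n n e)"
     "\<mu> \<in> rvec l" "(\<lambda>i. blk n n f i + blk 0 n e i + blk (2*n) n e i + mv n m (B r) (blk (3*n) m e) i + mv n l (mtrans (A r)) \<mu> i) = (\<lambda>_. 0)"
    unfolding Dpos_def Let_def by auto
  show ?thesis
    apply (rule that[of "blk 0 n f" "blk n n f" "blk (2*n) n f" "blk (3*n) m f" "blk 0 n e" "blk n n e" "blk (2*n) n e" "blk (3*n) m e" \<mu>])
    apply (fact | rule blk_rvec)+
    done
qed

lemma dirac_D: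
  assumes DF: "\<forall>s\<in>rvec n. (\<forall>v\<in>rvec n. mv l n (A r) v = (\<lambda>_. 0) \<longrightarrow> ip n s v = 0) \<longrightarrow>
                 (\<exists>\<mu>\<in>rvec l. s = mv n l (mtrans (A r)) \<mu>)"
  shows "dirac (3*n+m) (Dpos n m l A B r)"
proof -
  let ?D = "Dpos n m l A B r"
  let ?N = "3*n+m"
  let ?z = "\<lambda>_::nat. 0::real"
  note R = rvec_zero rvec_neg rvec_add rvec_diff rvec_scale mv_rvec blk_rvec
  have sub: "?D \<subseteq> rvec ?N \<times> rvec ?N" by (auto simp: Dpos_def)
  have zero: "(0, 0) \<in> ?D"
  proof -
    have "(cat4 n m ?z ?z ?z ?z, cat4 n m ?z ?z ?z ?z) \<in> ?D"
      by (subst Dpos_cat4) (auto simp: R mv_zero intro!: bexI[of _ ?z])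
    moreover have "cat4 n m ?z ?z ?z ?z = 0" by (auto simp: cat4_def fun_eq_iff)
    ultimately show ?thesis by simp
  qed
  have add: "(\<lambda>i. f i + f' i, \<lambda>i. e i + e' i) \<in> ?D" if P1: "(f, e) \<in> ?D" and P2: "(f', e') \<in> ?D" for f e f' e'
  proof -
    obtain a b c d a' b' c' d' \<mu> where A: "a \<in> rvec n" "b \<in> rvec n" "c \<in> rvec n" "d \<in> rvec m"
    "a' \<in> rvec n" "b' \<in> rvec n" "c' \<in> rvec n" "d' \<in> rvec m"
    "f = cat4 n m a b c d" "e = cat4 n m a' b' c' d'"
    "a = b'" "b' = c" "mv l n (A r) b' = (\<lambda>_. 0)" "d = mv m n (mtrans (B r)) b'"
    "\<mu> \<in> rvec l" "(\<lambda>i. b i + a' i + c' i + mv n m (B r) d' i + mv n l (mtrans (A r)) \<mu> i) = (\<lambda>_. 0)"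
      by (rule Dpos_mem_E[OF P1])
    obtain a2 b2 c2 d2 a2' b2' c2' d2' \<mu>2 where A2: "a2 \<in> rvec n" "b2 \<in> rvec n" "c2 \<in> rvec n" "d2 \<in> rvec m"
    "a2' \<in> rvec n" "b2' \<in> rvec n" "c2' \<in> rvec n" "d2' \<in> rvec m"
    "f' = cat4 n m a2 b2 c2 d2" "e' = cat4 n m a2' b2' c2' d2'"
    "a2 = b2'" "b2' = c2" "mv l n (A r) b2' = (\<lambda>_. 0)" "d2 = mv m n (mtrans (B r)) b2'"
    "\<mu>2 \<in> rvec l" "(\<lambda>i. b2 i + a2' i + c2' i + mv n m (B r) d2' i + mv n l (mtrans (A r)) \<mu>2 i) = (\<lambda>_. 0)"
      by (rule Dpos_mem_E[OF P2])
    have cf: "(\<lambda>i. f i + f' i) = cat4 n m (\<lambda>i. a i + a2 i) (\<lambda>i. b i + b2 i) (\<lambda>i. c i + c2 i) (\<lambda>i. d i + d2 i)"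
      using A(9) A2(9) by (auto simp: cat4_def fun_eq_iff)
    have ce: "(\<lambda>i. e i + e' i) = cat4 n m (\<lambda>i. a' i + a2' i) (\<lambda>i. b' i + b2' i) (\<lambda>i. c' i + c2' i) (\<lambda>i. d' i + d2' i)"
      using A(10) A2(10) by (auto simp: cat4_def fun_eq_iff)
    have mu: "(\<lambda>i. (b i + b2 i) + (a' i + a2' i) + (c' i + c2' i) + mv n m (B r) (\<lambda>i. d' i + d2' i) i
        + mv n l (mtrans (A r)) (\<lambda>i. \<mu> i + \<mu>2 i) i) = ?z"
    proof
      fix i
      show "(b i + b2 i) + (a' i + a2' i) + (c' i + c2' i) + mv n m (B r) (\<lambda>i. d' i + d2' i) i
        + mv n l (mtrans (A r)) (\<lambda>i. \<mu> i + \<mu>2 i) i = 0"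
        using fun_cong[OF A(16), of i] fun_cong[OF A2(16), of i] by (simp add: mv_add)
    qed
    show ?thesis unfolding cf ce
      apply (subst Dpos_cat4)
      using A A2 apply (simp_all add: R)
      using mu by (auto simp: mv_add intro!: bexI[of _ "\<lambda>i. \<mu> i + \<mu>2 i"] R)
  qed
  have scale: "(\<lambda>i. t * f i, \<lambda>i. t * e i) \<in> ?D" if P1: "(f, e) \<in> ?D" for f e t
  proof -
    obtain a b c d a' b' c' d' \<mu> where A: "a \<in> rvec n" "b \<in> rvec n" "c \<in> rvec n" "d \<in> rvec m"
    "a' \<in> rvec n" "b' \<in> rvec n" "c' \<in> rvec n" "d' \<in> rvec m"
    "f = cat4 n m a b c d" "e = cat4 n m a' b' c' d'"
    "a = b'" "b' = c" "mv l n (A r) b' = (\<lambda>_. 0)" "d = mv m n (mtrans (B r)) b'"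
    "\<mu> \<in> rvec l" "(\<lambda>i. b i + a' i + c' i + mv n m (B r) d' i + mv n l (mtrans (A r)) \<mu> i) = (\<lambda>_. 0)"
      by (rule Dpos_mem_E[OF P1])
    have cf: "(\<lambda>i. t * f i) = cat4 n m (\<lambda>i. t * a i) (\<lambda>i. t * b i) (\<lambda>i. t * c i) (\<lambda>i. t * d i)"
      using A(9) by (auto simp: cat4_def fun_eq_iff)
    have ce: "(\<lambda>i. t * e i) = cat4 n m (\<lambda>i. t * a' i) (\<lambda>i. t * b' i) (\<lambda>i. t * c' i) (\<lambda>i. t * d' i)"
      using A(10) by (auto simp: cat4_def fun_eq_iff)
    have mu: "(\<lambda>i. t * b i + t * a' i + t * c' i + mv n m (B r) (\<lambda>i. t * d' i) i
        + mv n l (mtrans (A r)) (\<lambda>i. t * \<mu> i) i) = ?z"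
    proof
      fix i
      have "t * (b i + a' i + c' i + mv n m (B r) d' i + mv n l (mtrans (A r)) \<mu> i) = 0"
        using fun_cong[OF A(16), of i] by simp
      then show "t * b i + t * a' i + t * c' i + mv n m (B r) (\<lambda>i. t * d' i) i
        + mv n l (mtrans (A r)) (\<lambda>i. t * \<mu> i) i = 0"
        by (simp add: mv_scale algebra_simps)
    qed
    show ?thesis unfolding cf ce
      apply (subst Dpos_cat4)
      using A apply (simp_all add: R)
      using mu by (auto simp: mv_scale mv_zero intro!: bexI[of _ "\<lambda>i. t * \<mu> i"] R)
  qed
  have iso: "ip ?N fh e + ip ?N f eh = 0" if P1: "(f, e) \<in> ?D" and P2: "(fh, eh) \<in> ?D" for f e fh eh
  proof -
    obtain a b c d a' b' c' d' \<mu> where A: "a \<in> rvec n" "b \<in> rvec n" "c \<in> rvec n" "d \<in> rvec m"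
    "a' \<in> rvec n" "b' \<in> rvec n" "c' \<in> rvec n" "d' \<in> rvec m"
    "f = cat4 n m a b c d" "e = cat4 n m a' b' c' d'"
    "a = b'" "b' = c" "mv l n (A r) b' = (\<lambda>_. 0)" "d = mv m n (mtrans (B r)) b'"
    "\<mu> \<in> rvec l" "(\<lambda>i. b i + a' i + c' i + mv n m (B r) d' i + mv n l (mtrans (A r)) \<mu> i) = (\<lambda>_. 0)"
      by (rule Dpos_mem_E[OF P1])
    obtain a2 b2 c2 d2 a2' b2' c2' d2' \<mu>2 where A2: "a2 \<in> rvec n" "b2 \<in> rvec n" "c2 \<in> rvec n" "d2 \<in> rvec m"
    "a2' \<in> rvec n" "b2' \<in> rvec n" "c2' \<in> rvec n" "d2' \<in> rvec m"
    "fh = cat4 n m a2 b2 c2 d2" "eh = cat4 n m a2' b2' c2' d2'"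
    "a2 = b2'" "b2' = c2" "mv l n (A r) b2' = (\<lambda>_. 0)" "d2 = mv m n (mtrans (B r)) b2'"
    "\<mu>2 \<in> rvec l" "(\<lambda>i. b2 i + a2' i + c2' i + mv n m (B r) d2' i + mv n l (mtrans (A r)) \<mu>2 i) = (\<lambda>_. 0)"
      by (rule Dpos_mem_E[OF P2])
    have o1: "ip n b2' b + ip n b2' a' + ip n b2' c' + ip n b2' (mv n m (B r) d') = 0"
      by (rule ip_orth[OF A(16) A2(13)])
    have o2: "ip n b' b2 + ip n b' a2' + ip n b' c2' + ip n b' (mv n m (B r) d2') = 0"
      by (rule ip_orth[OF A2(16) A(13)])
    have "ip ?N fh e + ip ?N f eh = ip n a2 a' + ip n b2 b' + ip n c2 c' + ip m d2 d'
       + (ip n a a2' + ip n b b2' + ip n c c2' + ip m d d2')"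
      using A A2 by (simp add: ip_cat4)
    also have "\<dots> = (ip n b2' b + ip n b2' a' + ip n b2' c' + ip n b2' (mv n m (B r) d'))
      + (ip n b' b2 + ip n b' a2' + ip n b' c2' + ip n b' (mv n m (B r) d2'))"
      using A(11,12,14) A2(11,12,14) by (simp add: ip_mtrans ip_mtrans2 ip_sym)
    finally show ?thesis using o1 o2 by simp
  qed
  have conv: "(f, e) \<in> ?D" if f: "f \<in> rvec ?N" and e: "e \<in> rvec ?N"
    and orth: "\<forall>(fh, eh)\<in>?D. ip ?N fh e + ip ?N f eh = 0" for f e
  proof -
    define a where "a = blk 0 n f"
    define b where "b = blk n n f"
    define c where "c = blk (2*n) n f"
    define d where "d = blk (3*n) m f"
    define a' where "a' = blk 0 n e"
    define b' where "b' = blk n n e"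
    define c' where "c' = blk (2*n) n e"
    define d' where "d' = blk (3*n) m e"
    have Rs: "a \<in> rvec n" "b \<in> rvec n" "c \<in> rvec n" "d \<in> rvec m"
      "a' \<in> rvec n" "b' \<in> rvec n" "c' \<in> rvec n" "d' \<in> rvec m"
      by (simp_all add: a_def b_def c_def d_def a'_def b'_def c'_def d'_def blk_rvec)
    have fe: "f = cat4 n m a b c d" "e = cat4 n m a' b' c' d'"
      using cat4_blk[OF f] cat4_blk[OF e]
      by (simp_all add: a_def b_def c_def d_def a'_def b'_def c'_def d'_def)
    have O: "ip ?N (cat4 n m a2 b2 c2 d2) e + ip ?N f (cat4 n m a2' b2' c2' d2') = 0"
      if "(cat4 n m a2 b2 c2 d2, cat4 n m a2' b2' c2' d2') \<in> ?D" for a2 b2 c2 d2 a2' b2' c2' d2'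
      using orth that by auto
    have t1: "ip n x b' - ip n x a = 0" if x: "x \<in> rvec n" for x
    proof -
      have "(cat4 n m ?z x ?z ?z, cat4 n m (\<lambda>i. - x i) ?z ?z ?z) \<in> ?D"
        using x by (subst Dpos_cat4) (auto simp: R mv_zero intro!: bexI[of _ ?z])
      from O[OF this] show ?thesis using x Rs
        by (simp add: fe ip_cat4 R ip_neg_right ip_sym)
    qed
    have ab: "a = b'"
      using t1[of "\<lambda>i. b' i - a i"] ip_eq_from[of b' n a] Rs
      by (simp add: R ip_diff_left ip_diff_right ip_sym algebra_simps)
    have t2: "ip n x b' - ip n x c = 0" if x: "x \<in> rvec n" for x
    proof -
      have "(cat4 n m ?z x ?z ?z, cat4 n m ?z ?z (\<lambda>i. - x i) ?z) \<in> ?D"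
        using x by (subst Dpos_cat4) (auto simp: R mv_zero intro!: bexI[of _ ?z])
      from O[OF this] show ?thesis using x Rs
        by (simp add: fe ip_cat4 R ip_neg_right ip_sym)
    qed
    have bc: "b' = c"
      using t2[of "\<lambda>i. b' i - c i"] ip_eq_from[of b' n c] Rs
      by (simp add: R ip_diff_left ip_diff_right ip_sym algebra_simps)
    have t3: "ip m y d - ip m y (mv m n (mtrans (B r)) b') = 0" if y: "y \<in> rvec m" for y
    proof -
      have "(cat4 n m ?z (\<lambda>i. - mv n m (B r) y i) ?z ?z, cat4 n m ?z ?z ?z y) \<in> ?D"
        using y by (subst Dpos_cat4) (auto simp: R mv_zero intro!: bexI[of _ ?z])
      from O[OF this] have "ip n (\<lambda>i. - mv n m (B r) y i) b' + ip m d y = 0"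
        using y Rs by (simp add: fe ip_cat4 R)
      then show ?thesis by (simp add: ip_neg_left ip_mtrans2 ip_sym)
    qed
    have dB: "d = mv m n (mtrans (B r)) b'"
      using t3[of "\<lambda>i. d i - mv m n (mtrans (B r)) b' i"] ip_eq_from[of d m "mv m n (mtrans (B r)) b'"] Rs
      by (simp add: R ip_diff_left ip_diff_right ip_sym algebra_simps)
    have t4: "ip l \<mu> (mv l n (A r) b') = 0" if mu: "\<mu> \<in> rvec l" for \<mu>
    proof -
      have "(cat4 n m ?z (mv n l (mtrans (A r)) \<mu>) ?z ?z, cat4 n m ?z ?z ?z ?z) \<in> ?D"
        using mu by (subst Dpos_cat4) (auto simp: R mv_zero mv_neg fun_eq_iff intro!: bexI[of _ "\<lambda>i. - \<mu> i"])
      from O[OF this] show ?thesis using mu Rs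
        by (simp add: fe ip_cat4 R ip_mtrans)
    qed
    have Ab: "mv l n (A r) b' = ?z"
      using t4[of "mv l n (A r) b'"] ip_self_zero[of "mv l n (A r) b'" l] by (simp add: R)
    define s where "s = (\<lambda>i. b i + a' i + c' i + mv n m (B r) d' i)"
    have t5: "ip n s w = 0" if w: "w \<in> rvec n" "mv l n (A r) w = ?z" for w
    proof -
      have "(cat4 n m w ?z w (mv m n (mtrans (B r)) w), cat4 n m ?z w ?z ?z) \<in> ?D"
        using w by (subst Dpos_cat4) (auto simp: R mv_zero intro!: bexI[of _ ?z])
      from O[OF this] have "ip n w a' + ip n w c' + ip m (mv m n (mtrans (B r)) w) d' + ip n b w = 0"
        using w Rs by (simp add: fe ip_cat4 R)
      then show ?thesis unfolding ip_mtrans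
        by (simp add: s_def ip_def sum.distrib algebra_simps)
    qed
    have sR: "s \<in> rvec n" using Rs by (auto simp: s_def rvec_def mv_def)
    obtain \<mu> where mu: "\<mu> \<in> rvec l" "s = mv n l (mtrans (A r)) \<mu>"
      using DF sR t5 by blast
    have ex: "\<exists>\<mu>\<in>rvec l. (\<lambda>i. b i + a' i + c' i + mv n m (B r) d' i + mv n l (mtrans (A r)) \<mu> i) = ?z"
      using mu by (intro bexI[of _ "\<lambda>i. - \<mu> i"]) (auto simp: R mv_neg s_def fun_eq_iff dest: fun_cong)
    show ?thesis unfolding fe
      using Rs ab bc dB Ab ex by (subst Dpos_cat4) auto
  qed
  show ?thesis unfolding dirac_def
  proof (intro conjI)
    show "\<forall>(f, e)\<in>?D. \<forall>(f', e')\<in>?D. (\<lambda>i. f i + f' i, \<lambda>i. e i + e' i) \<in> ?D" using add by blast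
    show "\<forall>(f, e)\<in>?D. \<forall>c::real. (\<lambda>i. c * f i, \<lambda>i. c * e i) \<in> ?D" using scale by blast
    show "\<forall>f\<in>rvec ?N. \<forall>e\<in>rvec ?N. ((f, e) \<in> ?D) = (\<forall>(fh, eh)\<in>?D. ip ?N fh e + ip ?N f eh = 0)"
      using iso conv by blast
  qed (use sub zero in auto)
qed

definition PhiF :: "nat \<Rightarrow> nat \<Rightarrow> (nat \<Rightarrow> nat) \<Rightarrow> (nat \<Rightarrow> nat \<Rightarrow> real) \<Rightarrow> (nat \<Rightarrow> real) \<Rightarrow> nat \<Rightarrow> real" where
  "PhiF n k idx C z = (\<lambda>j. if j < n then (if j \<in> idx ` {..<k} then
      - (\<Sum>j'<n. if j' \<in> idx ` {..<k} then 0 else C (inv_into {..<k} idx j) j' * z j') else z j) else 0)"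

definition PsiF :: "nat \<Rightarrow> nat \<Rightarrow> (nat \<Rightarrow> nat) \<Rightarrow> (nat \<Rightarrow> nat \<Rightarrow> real) \<Rightarrow> (nat \<Rightarrow> real) \<Rightarrow> nat \<Rightarrow> real" where
  "PsiF n k idx C z = (\<lambda>j. if j < n then (\<Sum>i<k. C i j * z (idx i)) else 0)"

lemma PhiF_rvec: "PhiF n k idx C z \<in> rvec n" by (auto simp: PhiF_def rvec_def)
lemma PsiF_rvec: "PsiF n k idx C z \<in> rvec n" by (auto simp: PsiF_def rvec_def)

lemma PhiF_add: "PhiF n k idx C (\<lambda>i. x i + y i) = (\<lambda>i. PhiF n k idx C x i + PhiF n k idx C y i)"
  by (auto simp: PhiF_def fun_eq_iff sum.distrib[symmetric] intro!: sum.cong simp: algebra_simps)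
lemma PhiF_scale: "PhiF n k idx C (\<lambda>i. t * x i) = (\<lambda>i. t * PhiF n k idx C x i)"
  by (auto simp: PhiF_def fun_eq_iff sum_distrib_left intro!: sum.cong simp: algebra_simps)
lemma PsiF_add: "PsiF n k idx C (\<lambda>i. x i + y i) = (\<lambda>i. PsiF n k idx C x i + PsiF n k idx C y i)"
  by (auto simp: PsiF_def fun_eq_iff sum.distrib[symmetric] intro!: sum.cong simp: algebra_simps)
lemma PsiF_scale: "PsiF n k idx C (\<lambda>i. t * x i) = (\<lambda>i. t * PsiF n k idx C x i)"
  by (auto simp: PsiF_def fun_eq_iff sum_distrib_left intro!: sum.cong simp: algebra_simps)

lemma sum_J:
  fixes g :: "nat \<Rightarrow> real"
  assumes "\<forall>i<k. idx i < n" "inj_on idx {..<k}"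
  shows "(\<Sum>j<n. if j \<in> idx ` {..<k} then g j else 0) = (\<Sum>i<k. g (idx i))"
proof -
  have "(\<Sum>j<n. if j \<in> idx ` {..<k} then g j else 0) = sum g ({..<n} \<inter> idx ` {..<k})"
    by (rule sum.inter_restrict[symmetric]) simp
  also have "{..<n} \<inter> idx ` {..<k} = idx ` {..<k}" using assms(1) by auto
  also have "sum g (idx ` {..<k}) = (\<Sum>i<k. g (idx i))" using assms(2) by (simp add: sum.reindex)
  finally show ?thesis .
qed

lemma swapG1: "(\<Sum>j<n. if P j then 0 else (\<Sum>i<k. C i j * Mp i) * z j) = (\<Sum>i<k. Mp i * (\<Sum>j<n. if P j then 0 else C i j * z j))" for C :: "nat \<Rightarrow> nat \<Rightarrow> real"
proof -
  have "(\<Sum>i<k. Mp i * (\<Sum>j<n. if P j then 0 else C i j * z j)) = (\<Sum>i<k. \<Sum>j<n. if P j then 0 else C i j * Mp i * z j)"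
    by (simp add: sum_distrib_left if_distrib mult_ac cong: if_cong)
  also have "\<dots> = (\<Sum>j<n. \<Sum>i<k. if P j then 0 else C i j * Mp i * z j)" by (rule sum.swap)
  also have "\<dots> = (\<Sum>j<n. if P j then 0 else (\<Sum>i<k. C i j * Mp i) * z j)"
    by (rule sum.cong) (auto simp: sum_distrib_right)
  finally show ?thesis by simp
qed

lemma swapG2: "(\<Sum>p<l. (\<Sum>i<k. C i * M p i) * \<mu> p) = (\<Sum>i<k. C i * (\<Sum>p<l. M p i * \<mu> p))" for C :: "nat \<Rightarrow> real"
proof -
  have "(\<Sum>p<l. (\<Sum>i<k. C i * M p i) * \<mu> p) = (\<Sum>p<l. \<Sum>i<k. C i * M p i * \<mu> p)"
    by (simp add: sum_distrib_right)
  also have "\<dots> = (\<Sum>i<k. \<Sum>p<l. C i * M p i * \<mu> p)" by (rule sum.swap)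
  also have "\<dots> = (\<Sum>i<k. C i * (\<Sum>p<l. M p i * \<mu> p))" by (simp add: sum_distrib_left mult_ac)
  finally show ?thesis .
qed

lemma sum_split_J: "(\<Sum>j<n. g j) = (\<Sum>j<n. if j \<in> S then g j else 0) + (\<Sum>j<n. if j \<in> S then 0 else g j)" for g :: "nat \<Rightarrow> real"
  by (subst sum.distrib[symmetric]) (rule sum.cong, auto)
locale frame =
  fixes n l k :: nat and idx :: "nat \<Rightarrow> nat" and M C :: "nat \<Rightarrow> nat \<Rightarrow> real"
  assumes idx_lt: "\<forall>i<k. idx i < n" and idx_inj: "inj_on idx {..<k}"
    and L4: "\<forall>j<n. \<forall>p<l. M p j = (\<Sum>i<k. C i j * M p (idx i))"
    and L5: "\<forall>y. (\<forall>p<l. (\<Sum>i<k. y i * M p (idx i)) = 0) \<longrightarrow> (\<forall>i<k. y i = 0)"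
    and L6: "\<forall>y. \<exists>\<mu>\<in>rvec l. \<forall>i<k. (\<Sum>p<l. M p (idx i) * \<mu> p) = y i"
begin

abbreviation "J \<equiv> idx ` {..<k}"
abbreviation "Phi \<equiv> PhiF n k idx C"
abbreviation "Psi \<equiv> PsiF n k idx C"

lemma sJ: "(\<Sum>j<n. if j \<in> J then g j else 0) = (\<Sum>i<k. g (idx i))" for g :: "nat \<Rightarrow> real"
  by (rule sum_J[OF idx_lt idx_inj])
lemma L4': "j < n \<Longrightarrow> p < l \<Longrightarrow> M p j = (\<Sum>i<k. C i j * M p (idx i))"
  using L4 by blast


lemma inv_idx: "i < k \<Longrightarrow> inv_into {..<k} idx (idx i) = i"
  using idx_inj by (simp add: inv_into_f_f)

lemma Phi_J: assumes i: "i < k" shows "Phi z (idx i) = - (\<Sum>j'<n. if j' \<in> J then 0 else C i j' * z j')"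
proof -
  have e: "inv_into {..<k} idx (idx i) = i" by (rule inv_idx[OF i])
  have "idx i < n" "idx i \<in> J" using idx_lt i by auto
  then show ?thesis unfolding PhiF_def e by simp
qed

lemma delta: assumes "i < k" "i0 < k" shows "C i (idx i0) = (if i = i0 then 1 else 0)"
proof -
  have "\<forall>p<l. (\<Sum>i<k. (C i (idx i0) - (if i = i0 then 1 else 0)) * M p (idx i)) = 0"
  proof (intro allI impI)
    fix p assume p: "p < l"
    have "M p (idx i0) = (\<Sum>i<k. C i (idx i0) * M p (idx i))" using L4'[of "idx i0" p] idx_lt assms p by simp
    moreover have "(\<Sum>i<k. (if i = i0 then 1 else 0) * M p (idx i)) = M p (idx i0)"
    proof -
      have "(\<Sum>i<k. (if i = i0 then 1 else 0) * M p (idx i)) = (\<Sum>i<k. if i = i0 then M p (idx i0) else 0)"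
        by (rule sum.cong) auto
      then show ?thesis using assms by simp
    qed
    ultimately show "(\<Sum>i<k. (C i (idx i0) - (if i = i0 then 1 else 0)) * M p (idx i)) = 0"
      by (simp add: left_diff_distrib sum_subtractf)
  qed
  then have "C i (idx i0) - (if i = i0 then 1 else 0) = 0"
    using L5[rule_format, of "\<lambda>i. C i (idx i0) - (if i = i0 then 1 else 0)"] assms(1) by simp
  then show ?thesis by simp
qed

lemma Psi_idx: assumes i0: "i0 < k" shows "Psi z (idx i0) = z (idx i0)"
proof -
  have "Psi z (idx i0) = (\<Sum>i<k. C i (idx i0) * z (idx i))" using idx_lt i0 by (simp add: PsiF_def)
  also have "\<dots> = (\<Sum>i<k. if i = i0 then z (idx i0) else 0)" by (rule sum.cong) (auto simp: delta i0)
  also have "\<dots> = z (idx i0)" using i0 by simp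
  finally show ?thesis .
qed

lemma Phi_nonJ: "j < n \<Longrightarrow> j \<notin> J \<Longrightarrow> Phi z j = z j"
  by (simp add: PhiF_def)

lemma Phi_ker: "mv l n M (Phi z) = (\<lambda>_. 0)"
proof
  fix p
  show "mv l n M (Phi z) p = 0"
  proof (cases "p < l")
    case True
    have "(\<Sum>j<n. M p j * Phi z j) = (\<Sum>j<n. if j \<in> J then M p j * Phi z j else 0) + (\<Sum>j<n. if j \<in> J then 0 else M p j * Phi z j)"
      by (rule sum_split_J)
    also have "(\<Sum>j<n. if j \<in> J then M p j * Phi z j else 0) =
        (\<Sum>i<k. M p (idx i) * - (\<Sum>j'<n. if j' \<in> J then 0 else C i j' * z j'))"
      unfolding sJ by (rule sum.cong[OF refl]) (simp add: Phi_J)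
    also have "(\<Sum>j<n. if j \<in> J then 0 else M p j * Phi z j) =
        (\<Sum>j'<n. if j' \<in> J then 0 else (\<Sum>i<k. C i j' * M p (idx i)) * z j')"
    proof (rule sum.cong[OF refl])
      fix j assume "j \<in> {..<n}"
      then show "(if j \<in> J then 0 else M p j * Phi z j) = (if j \<in> J then 0 else (\<Sum>i<k. C i j * M p (idx i)) * z j)"
        using L4'[of j p] True Phi_nonJ[of j z] by simp
    qed
    also have "\<dots> = (\<Sum>i<k. M p (idx i) * (\<Sum>j'<n. if j' \<in> J then 0 else C i j' * z j'))"
      by (rule swapG1)
    finally show ?thesis using True by (simp add: mv_def sum_negf)
  qed (simp add: mv_def)
qed

lemma Psi_range: "\<exists>\<mu>\<in>rvec l. Psi z = mv n l (mtrans M) \<mu>"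
proof -
  obtain \<mu> where mu: "\<mu> \<in> rvec l" "\<forall>i<k. (\<Sum>p<l. M p (idx i) * \<mu> p) = z (idx i)"
    using L6[rule_format, of "\<lambda>i. z (idx i)"] by blast
  have "Psi z j = mv n l (mtrans M) \<mu> j" for j
  proof (cases "j < n")
    case True
    have "mv n l (mtrans M) \<mu> j = (\<Sum>p<l. M p j * \<mu> p)"
      using True by (simp add: mv_def mtrans_def)
    also have "\<dots> = (\<Sum>p<l. (\<Sum>i<k. C i j * M p (idx i)) * \<mu> p)"
      by (rule sum.cong[OF refl]) (use True L4'[of j] in simp)
    also have "\<dots> = (\<Sum>i<k. C i j * (\<Sum>p<l. M p (idx i) * \<mu> p))"
      by (rule swapG2)
    also have "\<dots> = Psi z j" using True mu(2) by (simp add: PsiF_def)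
    finally show ?thesis by simp
  qed (simp add: PsiF_def mv_def)
  then show ?thesis using mu(1) by blast
qed

lemma Phi_local: "(\<And>j. j < n \<Longrightarrow> j \<notin> J \<Longrightarrow> z j = z' j) \<Longrightarrow> Phi z = Phi z'"
  by (auto simp: PhiF_def fun_eq_iff intro!: sum.cong)

lemma Psi_local: "(\<And>i. i < k \<Longrightarrow> z (idx i) = z' (idx i)) \<Longrightarrow> Psi z = Psi z'"
  by (auto simp: PsiF_def fun_eq_iff intro!: sum.cong)

lemma Phi_fix: assumes "v \<in> rvec n" "mv l n M v = (\<lambda>_. 0)" shows "Phi v = v"
proof
  fix j
  show "Phi v j = v j"
  proof (cases "j < n \<and> j \<in> J")
    case True
    then obtain i0 where i0: "i0 < k" "j = idx i0" by auto
    define y where "y i = v (idx i) + (\<Sum>j'<n. if j' \<in> J then 0 else C i j' * v j')" for i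
    have "\<forall>p<l. (\<Sum>i<k. y i * M p (idx i)) = 0"
    proof (intro allI impI)
      fix p assume p: "p < l"
      have "0 = (\<Sum>j<n. M p j * v j)" using fun_cong[OF assms(2), of p] p by (simp add: mv_def)
      also have "\<dots> = (\<Sum>j<n. if j \<in> J then M p j * v j else 0) + (\<Sum>j<n. if j \<in> J then 0 else M p j * v j)"
        by (rule sum_split_J)
      also have "(\<Sum>j<n. if j \<in> J then M p j * v j else 0) = (\<Sum>i<k. M p (idx i) * v (idx i))"
        by (rule sJ)
      also have "(\<Sum>j<n. if j \<in> J then 0 else M p j * v j) =
          (\<Sum>j'<n. if j' \<in> J then 0 else (\<Sum>i<k. C i j' * M p (idx i)) * v j')"
      proof (rule sum.cong[OF refl])
        fix j assume "j \<in> {..<n}"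
        then show "(if j \<in> J then 0 else M p j * v j) = (if j \<in> J then 0 else (\<Sum>i<k. C i j * M p (idx i)) * v j)"
          using L4'[of j p] p by simp
      qed
      also have "\<dots> = (\<Sum>i<k. M p (idx i) * (\<Sum>j'<n. if j' \<in> J then 0 else C i j' * v j'))"
        by (rule swapG1)
      finally show "(\<Sum>i<k. y i * M p (idx i)) = 0"
        by (simp add: y_def algebra_simps sum.distrib)
    qed
    then have "y i0 = 0" using L5[rule_format, of y i0] i0 by simp
    then show ?thesis using True i0 by (simp add: Phi_J y_def)
  next
    case False
    then show ?thesis using assms(1) by (auto simp: PhiF_def rvec_def)
  qed
qed

lemma Psi_fix: assumes "w = mv n l (mtrans M) \<mu>" shows "Psi w = w"
proof
  fix j
  show "Psi w j = w j"
  proof (cases "j < n")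
    case True
    have "Psi w j = (\<Sum>i<k. C i j * (\<Sum>p<l. M p (idx i) * \<mu> p))"
      using True idx_lt by (simp add: PsiF_def assms mv_def mtrans_def)
    also have "\<dots> = (\<Sum>p<l. (\<Sum>i<k. C i j * M p (idx i)) * \<mu> p)"
      by (rule swapG2[symmetric])
    also have "\<dots> = (\<Sum>p<l. M p j * \<mu> p)"
      by (rule sum.cong[OF refl]) (use True L4'[of j] in simp)
    also have "\<dots> = w j" using True by (simp add: assms mv_def mtrans_def)
    finally show ?thesis .
  qed (simp add: PsiF_def assms mv_def)
qed

lemma orth_compl:
  assumes s: "s \<in> rvec n" and o: "\<forall>v\<in>rvec n. mv l n M v = (\<lambda>_. 0) \<longrightarrow> ip n s v = 0"
  shows "\<exists>\<mu>\<in>rvec l. s = mv n l (mtrans M) \<mu>"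
proof -
  obtain \<mu> where mu: "\<mu> \<in> rvec l" "Psi s = mv n l (mtrans M) \<mu>" using Psi_range by blast
  define d where "d = (\<lambda>i. s i - Psi s i)"
  have dR: "d \<in> rvec n" using s by (simp add: d_def rvec_diff PsiF_rvec)
  have dJ: "d (idx i) = 0" if "i < k" for i using that by (simp add: d_def Psi_idx)
  have wo: "ip n (Psi s) v = 0" if "mv l n M v = (\<lambda>_. 0)" for v
    using that by (simp add: mu(2) ip_mtrans)
  have "ip n d (Phi d) = 0"
    using o wo[OF Phi_ker] Phi_ker PhiF_rvec by (simp add: d_def ip_diff_left)
  moreover have "ip n d (Phi d) = ip n d d"
    unfolding ip_def
  proof (rule sum.cong[OF refl])
    fix j assume "j \<in> {..<n}"
    then show "d j * Phi d j = d j * d j"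
      by (cases "j \<in> J") (auto simp: dJ Phi_nonJ)
  qed
  ultimately have "d = (\<lambda>_. 0)" using ip_self_zero[OF dR] by simp
  then have "s = Psi s" by (auto simp: d_def fun_eq_iff dest: fun_cong)
  then show ?thesis using mu by auto
qed

end

definition Tmap :: "nat \<Rightarrow> nat \<Rightarrow> nat \<Rightarrow> (nat \<Rightarrow> nat) \<Rightarrow> (nat \<Rightarrow> nat \<Rightarrow> real) \<Rightarrow> (nat \<Rightarrow> nat \<Rightarrow> real)
   \<Rightarrow> (nat \<Rightarrow> real) \<Rightarrow> (nat \<Rightarrow> real) \<times> (nat \<Rightarrow> real)" where
 "Tmap n m k idx C Bm z =
   (cat4 n m (PhiF n k idx C (blk 0 n z))
      (\<lambda>i. PsiF n k idx C (blk 0 n z) i - (blk n n z i + blk (2*n) n z i + mv n m Bm (blk (3*n) m z) i))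
      (PhiF n k idx C (blk 0 n z)) (mv m n (mtrans Bm) (PhiF n k idx C (blk 0 n z))),
    cat4 n m (blk n n z) (PhiF n k idx C (blk 0 n z)) (blk (2*n) n z) (blk (3*n) m z))"

lemma cat4_add: "cat4 n m (\<lambda>i. a i + a' i) (\<lambda>i. b i + b' i) (\<lambda>i. c i + c' i) (\<lambda>i. d i + d' i)
   = (\<lambda>i. cat4 n m a b c d i + cat4 n m a' b' c' d' i)"
  by (auto simp: cat4_def fun_eq_iff)
lemma cat4_scale: "cat4 n m (\<lambda>i. t * a i) (\<lambda>i. t * b i) (\<lambda>i. t * c i) (\<lambda>i. t * d i)
   = (\<lambda>i. t * cat4 n m a b c d i)"
  by (auto simp: cat4_def fun_eq_iff)
lemma cat4_inj:
  assumes "cat4 n m a b c d = cat4 n m a' b' c' d'"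
   "a \<in> rvec n" "b \<in> rvec n" "c \<in> rvec n" "d \<in> rvec m"
   "a' \<in> rvec n" "b' \<in> rvec n" "c' \<in> rvec n" "d' \<in> rvec m"
  shows "a = a' \<and> b = b' \<and> c = c' \<and> d = d'"
  using blk_cat4[of a n b c d m] blk_cat4[of a' n b' c' d' m] assms by metis

context frame
begin

lemma T_lin_bij:
  assumes AM: "A r = M"
  shows "lin_bij_onto (3*n+m) (Tmap n m k idx C (B r)) (Dpos n m l A B r)"
proof -
  let ?T = "Tmap n m k idx C (B r)"
  let ?D = "Dpos n m l A B r"
  let ?N = "3*n+m"
  note R = rvec_zero rvec_neg rvec_add rvec_diff rvec_scale mv_rvec blk_rvec PhiF_rvec PsiF_rvec
  have mem: "?T z \<in> ?D" for z
  proof -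
    obtain \<mu> where mu: "\<mu> \<in> rvec l" "Psi (blk 0 n z) = mv n l (mtrans M) \<mu>"
      using Psi_range by blast
    show ?thesis unfolding Tmap_def
      apply (subst Dpos_cat4)
      apply (simp_all add: R AM Phi_ker)
      using mu by (auto simp: mv_neg fun_eq_iff intro!: bexI[of _ "\<lambda>i. - \<mu> i"] R)
  qed
  have add: "?T (\<lambda>i. x i + y i) = (\<lambda>i. fst (?T x) i + fst (?T y) i, \<lambda>i. snd (?T x) i + snd (?T y) i)" for x y
    unfolding Tmap_def blk_add PhiF_add PsiF_add mv_add
    by (auto simp: cat4_def fun_eq_iff algebra_simps)
  have scale: "?T (\<lambda>i. t * x i) = (\<lambda>i. t * fst (?T x) i, \<lambda>i. t * snd (?T x) i)" for x t
    unfolding Tmap_def blk_scale PhiF_scale PsiF_scale mv_scale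
    by (auto simp: cat4_def fun_eq_iff algebra_simps)
  have inj: "inj_on ?T (rvec ?N)"
  proof (rule inj_onI)
    fix x y assume x: "x \<in> rvec ?N" and y: "y \<in> rvec ?N" and eq: "?T x = ?T y"
    have s: "blk n n x = blk n n y" "Phi (blk 0 n x) = Phi (blk 0 n y)"
        "blk (2*n) n x = blk (2*n) n y" "blk (3*n) m x = blk (3*n) m y"
      using cat4_inj[OF arg_cong[OF eq, of snd, unfolded Tmap_def snd_conv]] by (simp_all add: R)
    have f2: "(\<lambda>i. Psi (blk 0 n x) i - (blk n n x i + blk (2*n) n x i + mv n m (B r) (blk (3*n) m x) i)) =
          (\<lambda>i. Psi (blk 0 n y) i - (blk n n y i + blk (2*n) n y i + mv n m (B r) (blk (3*n) m y) i))"
      using cat4_inj[OF arg_cong[OF eq, of fst, unfolded Tmap_def fst_conv]] by (simp_all add: R)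
    have ps: "Psi (blk 0 n x) = Psi (blk 0 n y)"
    proof
      fix i show "Psi (blk 0 n x) i = Psi (blk 0 n y) i" using fun_cong[OF f2, of i] s by simp
    qed
    have b0: "blk 0 n x = blk 0 n y"
    proof
      fix j show "blk 0 n x j = blk 0 n y j"
      proof (cases "j < n")
        case True
        show ?thesis
        proof (cases "j \<in> J")
          case True
          then obtain i where i: "i < k" "j = idx i" by auto
          show ?thesis using fun_cong[OF ps, of j] i by (simp add: Psi_idx)
        next
          case False
          show ?thesis using fun_cong[OF s(2), of j] False \<open>j < n\<close> by (simp add: Phi_nonJ)
        qed
      qed (simp add: blk_def)
    qed
    show "x = y" using cat4_blk[OF x] cat4_blk[OF y] b0 s by metis
  qed
  have surj: "?D \<subseteq> ?T ` rvec ?N"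
  proof
    fix fe assume fe: "fe \<in> ?D"
    obtain f e where fe_def: "fe = (f, e)" by (cases fe)
    obtain a b c d a' b' c' d' \<mu> where A: "a \<in> rvec n" "b \<in> rvec n" "c \<in> rvec n" "d \<in> rvec m"
    "a' \<in> rvec n" "b' \<in> rvec n" "c' \<in> rvec n" "d' \<in> rvec m"
    "f = cat4 n m a b c d" "e = cat4 n m a' b' c' d'"
    "a = b'" "b' = c" "mv l n (A r) b' = (\<lambda>_. 0)" "d = mv m n (mtrans (B r)) b'"
    "\<mu> \<in> rvec l" "(\<lambda>i. b i + a' i + c' i + mv n m (B r) d' i + mv n l (mtrans (A r)) \<mu> i) = (\<lambda>_. 0)"
      by (rule Dpos_mem_E[OF fe[unfolded fe_def]])
    define s where "s = (\<lambda>i. b i + a' i + c' i + mv n m (B r) d' i)"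
    have s_eq: "s = mv n l (mtrans M) (\<lambda>i. - \<mu> i)"
    proof
      fix x
      have "b x + a' x + c' x + mv n m (B r) d' x + mv n l (mtrans M) \<mu> x = 0"
        using fun_cong[OF A(16), of x] AM by simp
      then show "s x = mv n l (mtrans M) (\<lambda>i. - \<mu> i) x"
        by (simp add: s_def mv_neg eq_neg_iff_add_eq_0)
    qed
    define z1 where "z1 = (\<lambda>j. if j < n then (if j \<in> J then s j else b' j) else 0)"
    have z1R: "z1 \<in> rvec n" by (auto simp: z1_def rvec_def)
    have Phz: "Phi z1 = b'"
    proof -
      have "Phi z1 = Phi b'" by (rule Phi_local) (simp add: z1_def)
      also have "\<dots> = b'" using Phi_fix A(6) A(13) AM by simp
      finally show ?thesis .
    qed
    have Psz: "Psi z1 = s"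
    proof -
      have "Psi z1 = Psi s" by (rule Psi_local) (use idx_lt in \<open>simp add: z1_def\<close>)
      also have "\<dots> = s" by (rule Psi_fix[OF s_eq])
      finally show ?thesis .
    qed
    define z where "z = cat4 n m z1 a' c' d'"
    have bz: "blk 0 n z = z1" "blk n n z = a'" "blk (2*n) n z = c'" "blk (3*n) m z = d'"
      using blk_cat4[OF z1R A(5) A(7) A(8)] by (simp_all add: z_def)
    have "?T z = (f, e)"
    proof -
      have bb: "(\<lambda>i. s i - (a' i + c' i + mv n m (B r) d' i)) = b"
        by (auto simp: s_def fun_eq_iff)
      show ?thesis unfolding Tmap_def bz Phz Psz bb using A by simp
    qed
    moreover have "z \<in> rvec ?N" by (simp add: z_def cat4_rvec)
    ultimately show "fe \<in> ?T ` rvec ?N" unfolding fe_def by (metis image_eqI)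
  qed
  have img: "?T ` rvec ?N = ?D" using surj mem by blast
  show ?thesis unfolding lin_bij_onto_def bij_betw_def using add scale inj img by blast
qed

end


lemma cont_PhiF:
  fixes c :: "'a::topological_space \<Rightarrow> nat \<Rightarrow> nat \<Rightarrow> real"
  assumes "\<forall>i<k. \<forall>j<n. continuous_on V (\<lambda>r. c r i j)"
  shows "continuous_on V (\<lambda>r. PhiF n k idx (c r) z j)"
proof (cases "j < n \<and> j \<in> idx ` {..<k}")
  case True
  have iv: "inv_into {..<k} idx j < k" using True by (auto intro: inv_into_into[where A="{..<k}", simplified])
  have "continuous_on V (\<lambda>r. - (\<Sum>j'<n. if j' \<in> idx ` {..<k} then 0 else c r (inv_into {..<k} idx j) j' * z j'))"
  proof (intro continuous_intros)
    fix j' assume "j' \<in> {..<n}"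
    then show "continuous_on V (\<lambda>r. if j' \<in> idx ` {..<k} then 0 else c r (inv_into {..<k} idx j) j' * z j')"
      using assms iv by (cases "j' \<in> idx ` {..<k}") (auto intro!: continuous_intros)
  qed
  then show ?thesis using True by (simp add: PhiF_def)
next
  case False
  then show ?thesis by (cases "j < n") (auto simp: PhiF_def intro!: continuous_intros)
qed

lemma cont_PsiF:
  fixes c :: "'a::topological_space \<Rightarrow> nat \<Rightarrow> nat \<Rightarrow> real"
  assumes "\<forall>i<k. \<forall>j<n. continuous_on V (\<lambda>r. c r i j)"
  shows "continuous_on V (\<lambda>r. PsiF n k idx (c r) z j)"
proof (cases "j < n")
  case True
  then show ?thesis using assms by (auto simp: PsiF_def intro!: continuous_intros)
qed (auto simp: PsiF_def intro!: continuous_intros)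

lemma cont_mv:
  fixes M :: "'a::topological_space \<Rightarrow> nat \<Rightarrow> nat \<Rightarrow> real"
  assumes "\<forall>i<a. \<forall>j<b. continuous_on V (\<lambda>r. M r i j)" "\<And>j. continuous_on V (\<lambda>r. x r j)"
  shows "continuous_on V (\<lambda>r. mv a b (M r) (x r) i)"
proof (cases "i < a")
  case True
  then show ?thesis using assms by (auto simp: mv_def intro!: continuous_intros)
qed (auto simp: mv_def intro!: continuous_intros)

lemma cont_cat4:
  fixes a b c d :: "'a::topological_space \<Rightarrow> nat \<Rightarrow> real"
  assumes "\<And>j. continuous_on V (\<lambda>r. a r j)" "\<And>j. continuous_on V (\<lambda>r. b r j)"
    "\<And>j. continuous_on V (\<lambda>r. c r j)" "\<And>j. continuous_on V (\<lambda>r. d r j)"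
  shows "continuous_on V (\<lambda>r. cat4 n m (a r) (b r) (c r) (d r) i)"
  unfolding cat4_def
  by (cases "i < n"; cases "i < 2*n"; cases "i < 3*n"; cases "i < 3*n+m") (simp_all add: assms)

lemma cont_Tmap:
  fixes c B :: "'a::topological_space \<Rightarrow> nat \<Rightarrow> nat \<Rightarrow> real"
  assumes cc: "\<forall>i<k. \<forall>j<n. continuous_on V (\<lambda>r. c r i j)"
    and cB: "\<forall>i<n. \<forall>j<m. continuous_on V (\<lambda>r. B r i j)"
  shows "continuous_on V (\<lambda>r. Tmap n m k idx (c r) (B r) z)"
proof -
  have cBt: "\<forall>i<m. \<forall>j<n. continuous_on V (\<lambda>r. mtrans (B r) i j)" using cB by (simp add: mtrans_def)
  note P = cont_PhiF[OF cc] cont_PsiF[OF cc]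
  have c1: "continuous_on V (\<lambda>r. fst (Tmap n m k idx (c r) (B r) z))"
    unfolding Tmap_def fst_conv
    by (rule continuous_on_coordinatewise_then_product, rule cont_cat4)
       (auto intro!: continuous_intros P cont_mv[OF cB] cont_mv[OF cBt])
  have c2: "continuous_on V (\<lambda>r. snd (Tmap n m k idx (c r) (B r) z))"
    unfolding Tmap_def snd_conv
    by (rule continuous_on_coordinatewise_then_product, rule cont_cat4)
       (auto intro!: continuous_intros P)
  have "continuous_on V (\<lambda>r. (fst (Tmap n m k idx (c r) (B r) z), snd (Tmap n m k idx (c r) (B r) z)))"
    using c1 c2 by (rule continuous_on_Pair)
  then show ?thesis by simp
qed

lemma cont_det:
  fixes Mf :: "'a::topological_space \<Rightarrow> real mat"
  assumes car: "\<And>r. Mf r \<in> carrier_mat d d"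
    and ce: "\<And>i j. i < d \<Longrightarrow> j < d \<Longrightarrow> continuous_on V (\<lambda>r. Mf r $$ (i, j))"
  shows "continuous_on V (\<lambda>r. Determinant.det (Mf r))"
proof -
  have "(\<lambda>r. Determinant.det (Mf r)) = (\<lambda>r. \<Sum>p\<in>{p. p permutes {0..<d}}. signof p * (\<Prod>i = 0..<d. Mf r $$ (i, p i)))"
    by (rule ext) (rule det_def'[OF car])
  moreover have "continuous_on V (\<lambda>r. \<Sum>p\<in>{p. p permutes {0..<d}}. signof p * (\<Prod>i = 0..<d. Mf r $$ (i, p i)))"
  proof (intro continuous_intros)
    fix p i assume p: "p \<in> {p. p permutes {0..<d}}" and i: "i \<in> {0..<d}"
    have "p i < d" using p i by (auto dest: permutes_in_image)
    then show "continuous_on V (\<lambda>r. Mf r $$ (i, p i))" using i by (auto intro: ce)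
  qed
  ultimately show ?thesis by (simp only:)
qed

lemma gram_jnf:
  fixes g :: "'a::topological_space \<Rightarrow> nat \<Rightarrow> nat \<Rightarrow> real"
  assumes gc: "\<forall>i<k. \<forall>j<k. continuous_on V (\<lambda>r. g r i j)"
  defines "Gm r \<equiv> Matrix.mat k k (\<lambda>(i, j). g r i j)"
  shows "continuous_on V (\<lambda>r. Determinant.det (Gm r))"
    "\<And>i j. i < k \<Longrightarrow> j < k \<Longrightarrow> continuous_on V (\<lambda>r. adj_mat (Gm r) $$ (i, j))"
    "\<And>r i i'. i < k \<Longrightarrow> i' < k \<Longrightarrow> (\<Sum>j<k. g r i j * adj_mat (Gm r) $$ (j, i')) = (if i = i' then Determinant.det (Gm r) else 0)"
    "\<And>r i i'. i < k \<Longrightarrow> i' < k \<Longrightarrow> (\<Sum>j<k. adj_mat (Gm r) $$ (i, j) * g r j i') = (if i = i' then Determinant.det (Gm r) else 0)"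
    "\<And>r. Determinant.det (Gm r) = 0 \<Longrightarrow> \<exists>y. (\<exists>i<k. y i \<noteq> 0) \<and> (\<forall>i<k. (\<Sum>j<k. g r i j * y j) = 0)"
proof -
  have car: "Gm r \<in> carrier_mat k k" for r by (simp add: Gm_def)
  have ent: "Gm r $$ (i, j) = g r i j" if "i < k" "j < k" for r i j using that by (simp add: Gm_def)
  show "continuous_on V (\<lambda>r. Determinant.det (Gm r))"
    by (rule cont_det[OF car]) (simp add: ent gc)
  show "continuous_on V (\<lambda>r. adj_mat (Gm r) $$ (i, j))" if ij: "i < k" "j < k" for i j
  proof -
    have e: "adj_mat (Gm r) $$ (i, j) = (- 1) ^ (j + i) * Determinant.det (mat_delete (Gm r) j i)" for r
      using ij car[of r] by (simp add: adj_mat_def cofactor_def)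
    have "continuous_on V (\<lambda>r. Determinant.det (mat_delete (Gm r) j i))"
    proof (rule cont_det)
      show "mat_delete (Gm r) j i \<in> carrier_mat (k - 1) (k - 1)" for r using car[of r] by (simp add: mat_delete_def)
      fix i' j' assume b: "i' < k - 1" "j' < k - 1"
      have e2: "mat_delete (Gm r) j i $$ (i', j') = g r (if i' < j then i' else Suc i') (if j' < i then j' else Suc j')" for r
        using b by (simp add: mat_delete_def Gm_def)
      have "(if i' < j then i' else Suc i') < k" "(if j' < i then j' else Suc j') < k" using b by auto
      then show "continuous_on V (\<lambda>r. mat_delete (Gm r) j i $$ (i', j'))"
        unfolding e2 using gc by blast
    qed
    then show ?thesis unfolding e by (intro continuous_intros)
  qed
  show "(\<Sum>j<k. g r i j * adj_mat (Gm r) $$ (j, i')) = (if i = i' then Determinant.det (Gm r) else 0)"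
    if "i < k" "i' < k" for r i i'
  proof -
    have "(Gm r * adj_mat (Gm r)) $$ (i, i') = (Determinant.det (Gm r) \<cdot>\<^sub>m 1\<^sub>m k) $$ (i, i')"
      using adj_mat(2)[OF car[of r]] by simp
    moreover have "(Gm r * adj_mat (Gm r)) $$ (i, i') = (\<Sum>j<k. g r i j * adj_mat (Gm r) $$ (j, i'))"
      using that adj_mat(1)[OF car[of r]] car[of r]
      by (simp add: scalar_prod_def ent atLeast0LessThan)
    ultimately show ?thesis using that by simp
  qed
  show "(\<Sum>j<k. adj_mat (Gm r) $$ (i, j) * g r j i') = (if i = i' then Determinant.det (Gm r) else 0)"
    if "i < k" "i' < k" for r i i'
  proof -
    have "(adj_mat (Gm r) * Gm r) $$ (i, i') = (Determinant.det (Gm r) \<cdot>\<^sub>m 1\<^sub>m k) $$ (i, i')"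
      using adj_mat(3)[OF car[of r]] by simp
    moreover have "(adj_mat (Gm r) * Gm r) $$ (i, i') = (\<Sum>j<k. adj_mat (Gm r) $$ (i, j) * g r j i')"
      using that adj_mat(1)[OF car[of r]] car[of r]
      by (simp add: scalar_prod_def ent atLeast0LessThan)
    ultimately show ?thesis using that by simp
  qed
  show "\<exists>y. (\<exists>i<k. y i \<noteq> 0) \<and> (\<forall>i<k. (\<Sum>j<k. g r i j * y j) = 0)"
    if d0: "Determinant.det (Gm r) = 0" for r
  proof -
    obtain v where v: "v \<in> carrier_vec k" "v \<noteq> 0\<^sub>v k" "Gm r *\<^sub>v v = 0\<^sub>v k"
      using det_0_iff_vec_prod_zero[OF car[of r]] d0 by blast
    have "\<exists>i<k. vec_index v i \<noteq> 0"
    proof (rule ccontr)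
      assume "\<not> ?thesis"
      then have "v = 0\<^sub>v k" using v(1) by (auto simp: vec_eq_iff)
      then show False using v(2) by simp
    qed
    moreover have "\<forall>i<k. (\<Sum>j<k. g r i j * vec_index v j) = 0"
    proof (intro allI impI)
      fix i assume i: "i < k"
      have "vec_index (Gm r *\<^sub>v v) i = 0" using v(3) i by simp
      then show "(\<Sum>j<k. g r i j * vec_index v j) = 0"
        using i v(1) car[of r] by (simp add: scalar_prod_def ent atLeast0LessThan)
    qed
    ultimately show ?thesis by blast
  qed
qed

interpretation fs: vector_space fscale
  by unfold_locales (auto simp: fscale_def fun_eq_iff algebra_simps)

lemma sum_fun_apply: "(sum f I) p = (\<Sum>i\<in>I. f i p)" for f :: "'b \<Rightarrow> nat \<Rightarrow> real"
  by (induction I rule: infinite_finite_induct) (auto simp: plus_fun_def zero_fun_def)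

definition colv :: "nat \<Rightarrow> (nat \<Rightarrow> nat \<Rightarrow> real) \<Rightarrow> nat \<Rightarrow> nat \<Rightarrow> real" where
  "colv l M j = (\<lambda>p. if p < l then M p j else 0)"

lemma rank_colv: "mat_rank l n M = fs.dim (colv l M ` {..<n})"
  by (simp add: mat_rank_def colv_def)

lemma lincomb_apply: "(\<Sum>i<k. fscale (y i) (colv l M (idx i))) p = (if p < l then (\<Sum>i<k. y i * M p (idx i)) else 0)"
  by (simp add: sum_fun_apply fscale_def colv_def)

lemma dswap: fixes a :: "'c \<Rightarrow> real"
  shows "(\<Sum>i\<in>A. a i * (\<Sum>j\<in>B. G i j * y j)) = (\<Sum>j\<in>B. (\<Sum>i\<in>A. a i * G i j) * y j)"
proof -
  have "(\<Sum>i\<in>A. a i * (\<Sum>j\<in>B. G i j * y j)) = (\<Sum>i\<in>A. \<Sum>j\<in>B. a i * G i j * y j)"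
    by (simp add: sum_distrib_left mult.assoc)
  also have "\<dots> = (\<Sum>j\<in>B. \<Sum>i\<in>A. a i * G i j * y j)" by (rule sum.swap)
  also have "\<dots> = (\<Sum>j\<in>B. (\<Sum>i\<in>A. a i * G i j) * y j)" by (simp add: sum_distrib_right)
  finally show ?thesis .
qed

lemma sum_delta_mult: fixes a :: real and i k :: nat assumes "i < k"
  shows "(\<Sum>j<k. (if i = j then a else 0) * y j) = a * y i"
proof -
  have "(\<Sum>j<k. (if i = j then a else 0) * y j) = (\<Sum>j<k. if j = i then a * y i else 0)"
    by (rule sum.cong) auto
  then show ?thesis using assms by (simp add: sum.delta)
qed

lemma frame_from_gram:
  fixes M :: "nat \<Rightarrow> nat \<Rightarrow> real" and aG :: "nat \<Rightarrow> nat \<Rightarrow> real"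
  assumes idx: "\<forall>i<k. idx i < n" "inj_on idx {..<k}"
    and adj: "\<And>i i'. i < k \<Longrightarrow> i' < k \<Longrightarrow> (\<Sum>j<k. (\<Sum>p<l. M p (idx i) * M p (idx j)) * aG j i') = (if i = i' then dG else 0)"
    "\<And>i i'. i < k \<Longrightarrow> i' < k \<Longrightarrow> (\<Sum>j<k. aG i j * (\<Sum>p<l. M p (idx j) * M p (idx i'))) = (if i = i' then dG else 0)"
    and d: "dG \<noteq> 0"
    and rk: "fs.dim (colv l M ` {..<n}) = k"
  defines "c \<equiv> (\<lambda>i j. (\<Sum>i'<k. aG i i' * (\<Sum>p<l. M p (idx i') * M p j)) / dG)"
  shows "frame n l k idx M c"
proof -
  let ?g = "\<lambda>i j. (\<Sum>p<l. M p (idx i) * M p (idx j))"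
  have solve: "(\<Sum>i'<k. aG i i' * (\<Sum>i''<k. ?g i' i'' * y i'')) = dG * y i" if i: "i < k" for i y
  proof -
    have "(\<Sum>i'<k. aG i i' * (\<Sum>i''<k. ?g i' i'' * y i'')) = (\<Sum>i''<k. (\<Sum>i'<k. aG i i' * ?g i' i'') * y i'')"
      by (rule dswap)
    also have "\<dots> = (\<Sum>i''<k. (if i = i'' then dG else 0) * y i'')"
      by (rule sum.cong[OF refl]) (simp add: adj(2)[OF i])
    also have "\<dots> = dG * y i" using i by (rule sum_delta_mult)
    finally show ?thesis .
  qed
  have L5: "\<forall>y. (\<forall>p<l. (\<Sum>i<k. y i * M p (idx i)) = 0) \<longrightarrow> (\<forall>i<k. y i = 0)"
  proof (intro allI impI)
    fix y i assume h: "\<forall>p<l. (\<Sum>i<k. y i * M p (idx i)) = 0" and i: "i < k"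
    have G0: "(\<Sum>i''<k. ?g i' i'' * y i'') = 0" for i'
    proof -
      have "(\<Sum>i''<k. ?g i' i'' * y i'') = (\<Sum>p<l. M p (idx i') * (\<Sum>i''<k. M p (idx i'') * y i''))"
        by (rule dswap[symmetric])
      also have "\<dots> = 0" using h by (simp add: mult.commute)
      finally show ?thesis .
    qed
    have "dG * y i = 0" using solve[OF i, of y] by (simp add: G0)
    then show "y i = 0" using d by simp
  qed
  have L6: "\<forall>y. \<exists>\<mu>\<in>rvec l. \<forall>i<k. (\<Sum>p<l. M p (idx i) * \<mu> p) = y i"
  proof
    fix y
    define w where "w i = (\<Sum>j<k. aG i j * y j) / dG" for i
    define \<mu> where "\<mu> p = (if p < l then (\<Sum>i<k. M p (idx i) * w i) else 0)" for p
    have "(\<Sum>p<l. M p (idx i) * \<mu> p) = y i" if i: "i < k" for i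
    proof -
      have "(\<Sum>p<l. M p (idx i) * \<mu> p) = (\<Sum>p<l. M p (idx i) * (\<Sum>j<k. M p (idx j) * w j))"
        by (rule sum.cong[OF refl]) (simp add: \<mu>_def)
      also have "\<dots> = (\<Sum>j<k. ?g i j * w j)" by (rule dswap)
      also have "\<dots> = (\<Sum>j<k. ?g i j * (\<Sum>j'<k. aG j j' * y j')) / dG"
        unfolding w_def times_divide_eq_right sum_divide_distrib[symmetric] by (rule refl)
      also have "\<dots> = (\<Sum>j'<k. (\<Sum>j<k. ?g i j * aG j j') * y j') / dG"
        by (simp only: dswap)
      also have "\<dots> = (\<Sum>j'<k. (if i = j' then dG else 0) * y j') / dG"
        by (rule arg_cong[where f="\<lambda>x. x / dG"], rule sum.cong[OF refl]) (simp add: adj(1)[OF i])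
      also have "\<dots> = y i" using i d by (simp add: sum_delta_mult)
      finally show ?thesis .
    qed
    moreover have "\<mu> \<in> rvec l" by (simp add: \<mu>_def rvec_def)
    ultimately show "\<exists>\<mu>\<in>rvec l. \<forall>i<k. (\<Sum>p<l. M p (idx i) * \<mu> p) = y i" by blast
  qed
  let ?col = "colv l M"
  let ?Br = "(\<lambda>i. ?col (idx i)) ` {..<k}"
  have injc: "inj_on (\<lambda>i. ?col (idx i)) {..<k}"
  proof (rule inj_onI, rule ccontr)
    fix i i' assume i: "i \<in> {..<k}" and i': "i' \<in> {..<k}" and eq: "?col (idx i) = ?col (idx i')" and ne: "i \<noteq> i'"
    define y where "y j = (if j = i then 1 else if j = i' then -1 else (0::real))" for j
    have "\<forall>p<l. (\<Sum>j<k. y j * M p (idx j)) = 0"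
    proof (intro allI impI)
      fix p assume p: "p < l"
      have "M p (idx i) = M p (idx i')" using fun_cong[OF eq, of p] p by (simp add: colv_def)
      moreover have "(\<Sum>j<k. y j * M p (idx j)) = M p (idx i) - M p (idx i')"
      proof -
        have "(\<Sum>j<k. y j * M p (idx j)) = (\<Sum>j<k. (if j = i then M p (idx i) else 0) + (if j = i' then - M p (idx i') else 0))"
          by (rule sum.cong[OF refl]) (use ne in \<open>auto simp: y_def\<close>)
        also have "\<dots> = M p (idx i) - M p (idx i')" using i i' by (simp add: sum.distrib)
        finally show ?thesis .
      qed
      ultimately show "(\<Sum>j<k. y j * M p (idx j)) = 0" by simp
    qed
    then have "y i = 0" using L5[rule_format, of y i] i by simp
    then show False by (simp add: y_def)
  qed
  have cardBr: "card ?Br = k" using injc by (simp add: card_image)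
  have finBr: "finite ?Br" by simp
  have reidx: "(\<Sum>b\<in>?Br. fscale (u b) b) = (\<Sum>i<k. fscale (u (?col (idx i))) (?col (idx i)))" for u
    using injc by (simp add: sum.reindex)
  have indBr: "fs.independent ?Br"
  proof (rule fs.independent_if_scalars_zero[OF finBr])
    fix f b assume s: "(\<Sum>b\<in>?Br. fscale (f b) b) = 0" and b: "b \<in> ?Br"
    have "\<forall>p<l. (\<Sum>i<k. f (?col (idx i)) * M p (idx i)) = 0"
    proof (intro allI impI)
      fix p assume p: "p < l"
      have "(\<Sum>i<k. fscale (f (?col (idx i))) (?col (idx i))) p = 0"
        using s unfolding reidx by (simp add: zero_fun_def)
      then show "(\<Sum>i<k. f (?col (idx i)) * M p (idx i)) = 0" using p by (simp add: lincomb_apply)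
    qed
    then show "f b = 0" using L5[rule_format, of "\<lambda>i. f (?col (idx i))"] b by auto
  qed
  have inspan: "?col j \<in> fs.span ?Br" if j: "j < n" for j
  proof (rule ccontr)
    assume nin: "?col j \<notin> fs.span ?Br"
    have ind2: "fs.independent (insert (?col j) ?Br)" by (rule fs.independent_insertI[OF nin indBr])
    have card2: "card (insert (?col j) ?Br) = Suc k"
      using nin fs.span_base[of "?col j" ?Br] cardBr by (subst card_insert_disjoint) auto
    obtain B' where B': "B' \<subseteq> ?col ` {..<n}" "fs.independent B'" "?col ` {..<n} \<subseteq> fs.span B'" "card B' = fs.dim (?col ` {..<n})"
      by (rule fs.basis_exists)
    have finB': "finite B'" using B'(1) by (rule finite_subset) simp
    have "insert (?col j) ?Br \<subseteq> ?col ` {..<n}" using j idx(1) by auto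
    also have "\<dots> \<subseteq> fs.span B'" by (rule B'(3))
    finally have "card (insert (?col j) ?Br) \<le> card B'"
      using fs.independent_span_bound[OF finB' ind2] by blast
    then show False using card2 B'(4) rk by simp
  qed
  have L4: "\<forall>j<n. \<forall>p<l. M p j = (\<Sum>i<k. c i j * M p (idx i))"
  proof (intro allI impI)
    fix j p assume j: "j < n" and p: "p < l"
    obtain u where u: "?col j = (\<Sum>b\<in>?Br. fscale (u b) b)"
      using inspan[OF j] unfolding fs.span_finite[OF finBr] by blast
    define y where "y i = u (?col (idx i))" for i
    have Mj: "M p' j = (\<Sum>i<k. y i * M p' (idx i))" if "p' < l" for p'
    proof -
      have "M p' j = ?col j p'" using that by (simp add: colv_def)
      also have "\<dots> = (\<Sum>i<k. y i * M p' (idx i))" unfolding u reidx using that by (simp add: lincomb_apply y_def)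
      finally show ?thesis .
    qed
    have cy: "c i j = y i" if i: "i < k" for i
    proof -
      have "(\<Sum>p<l. M p (idx i') * M p j) = (\<Sum>i''<k. ?g i' i'' * y i'')" for i'
      proof -
        have "(\<Sum>p<l. M p (idx i') * M p j) = (\<Sum>p<l. M p (idx i') * (\<Sum>i''<k. M p (idx i'') * y i''))"
          by (rule sum.cong[OF refl]) (simp add: Mj mult.commute)
        also have "\<dots> = (\<Sum>i''<k. ?g i' i'' * y i'')"
          by (rule dswap)
        finally show ?thesis .
      qed
      then have "c i j = (\<Sum>i'<k. aG i i' * (\<Sum>i''<k. ?g i' i'' * y i'')) / dG" by (simp add: c_def)
      also have "\<dots> = y i" using solve[OF i, of y] d by simp
      finally show ?thesis .
    qed
    show "M p j = (\<Sum>i<k. c i j * M p (idx i))" using Mj[OF p] cy by simp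
  qed
  show ?thesis by (rule frame.intro[OF idx L4 L5 L6])
qed


lemma local_frame:
  fixes A :: "(nat \<Rightarrow> real) \<Rightarrow> nat \<Rightarrow> nat \<Rightarrow> real"
  assumes Uo: "openin (top_of_set (rvec n)) U"
    and Ac: "\<forall>i<l. \<forall>j<n. continuous_on U (\<lambda>r. A r i j)"
    and rk: "\<forall>r\<in>U. mat_rank l n (A r) = k0"
    and x: "x \<in> U"
  shows "\<exists>V k idx c. openin (top_of_set (rvec n)) V \<and> x \<in> V \<and> V \<subseteq> U \<and>
     (\<forall>i<k. \<forall>j<n. continuous_on V (\<lambda>r. c r i j)) \<and> (\<forall>r\<in>V. frame n l k idx (A r) (c r))"
proof -
  let ?col = "colv l (A x)"
  obtain Bx where Bx: "Bx \<subseteq> ?col ` {..<n}" "fs.independent Bx" "?col ` {..<n} \<subseteq> fs.span Bx"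
      "card Bx = fs.dim (?col ` {..<n})"
    by (rule fs.basis_exists)
  define k where "k = card Bx"
  have finB: "finite Bx" using Bx(1) by (rule finite_subset) simp
  obtain h where h: "bij_betw h {0..<k} Bx" using ex_bij_betw_nat_finite[OF finB] k_def by blast
  have h': "bij_betw h {..<k} Bx" using h by (simp add: atLeast0LessThan)
  have hB: "h i \<in> Bx" if "i < k" for i using h' that by (auto dest: bij_betwE)
  define idx where "idx i = inv_into {..<n} ?col (h i)" for i
  have colidx: "?col (idx i) = h i" if "i < k" for i
    unfolding idx_def using hB[OF that] Bx(1) by (auto intro: f_inv_into_f)
  have idx_lt: "\<forall>i<k. idx i < n"
  proof (intro allI impI)
    fix i assume "i < k"
    then have "h i \<in> ?col ` {..<n}" using hB Bx(1) by auto
    then show "idx i < n" unfolding idx_def using inv_into_into[of "h i" ?col "{..<n}"] by simp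
  qed
  have idx_inj: "inj_on idx {..<k}"
  proof (rule inj_onI)
    fix i i' assume i: "i \<in> {..<k}" and i': "i' \<in> {..<k}" and e: "idx i = idx i'"
    have "h i = h i'" using colidx[of i] colidx[of i'] i i' e by simp
    then show "i = i'" using h' i i' by (auto simp: bij_betw_def inj_on_def)
  qed
  define g where "g r i j = (\<Sum>p<l. A r p (idx i) * A r p (idx j))" for r i j
  have gc: "\<forall>i<k. \<forall>j<k. continuous_on U (\<lambda>r. g r i j)"
  proof (intro allI impI)
    fix i j assume "i < k" "j < k"
    then have "idx i < n" "idx j < n" using idx_lt by auto
    then show "continuous_on U (\<lambda>r. g r i j)" unfolding g_def using Ac by (auto intro!: continuous_intros)
  qed
  define dG where "dG r = Determinant.det (Matrix.mat k k (\<lambda>(i, j). g r i j))" for r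
  define aG where "aG r i j = adj_mat (Matrix.mat k k (\<lambda>(i, j). g r i j)) $$ (i, j)" for r i j
  note GJ = gram_jnf[OF gc, folded dG_def aG_def]
  have cdet: "continuous_on U dG" using GJ(1) by (simp add: dG_def)
  have cadj: "continuous_on U (\<lambda>r. aG r i j)" if "i < k" "j < k" for i j using GJ(2)[OF that] by (simp add: aG_def)
  have dx: "dG x \<noteq> 0"
  proof
    assume "dG x = 0"
    then obtain y where y: "\<exists>i<k. y i \<noteq> 0" "\<forall>i<k. (\<Sum>j<k. g x i j * y j) = 0"
      using GJ(5)[of x] by (auto simp: dG_def)
    define z where "z p = (\<Sum>i<k. A x p (idx i) * y i)" for p
    have Gz: "(\<Sum>j<k. g x i j * y j) = (\<Sum>p<l. A x p (idx i) * z p)" for i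
      unfolding g_def z_def by (rule dswap[symmetric])
    have "(\<Sum>i<k. y i * (\<Sum>p<l. A x p (idx i) * z p)) = (\<Sum>p<l. (\<Sum>i<k. y i * A x p (idx i)) * z p)"
      by (rule dswap)
    also have "\<dots> = (\<Sum>p<l. z p * z p)" by (simp add: z_def mult.commute)
    finally have "(\<Sum>p<l. z p * z p) = 0" using y(2) Gz by simp
    then have z0: "\<forall>p\<in>{..<l}. z p * z p = 0" by (subst (asm) sum_nonneg_eq_0_iff) auto
    have lc: "(\<Sum>i<k. fscale (y i) (?col (idx i))) = 0"
    proof
      fix p show "(\<Sum>i<k. fscale (y i) (?col (idx i))) p = 0 p"
        using z0 by (auto simp: lincomb_apply z_def mult.commute)
    qed
    define u where "u b = y (inv_into {..<k} h b)" for b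
    have uh: "u (h i) = y i" if "i < k" for i
      using h' that by (simp add: u_def bij_betw_def inv_into_f_f)
    have injh: "inj_on h {..<k}" and imh: "h ` {..<k} = Bx" using h' by (auto simp: bij_betw_def)
    have "(\<Sum>b\<in>Bx. fscale (u b) b) = (\<Sum>b\<in>h ` {..<k}. fscale (u b) b)" by (simp add: imh)
    also have "\<dots> = (\<Sum>i<k. fscale (u (h i)) (h i))" by (simp add: sum.reindex[OF injh])
    also have "\<dots> = (\<Sum>i<k. fscale (y i) (?col (idx i)))"
      by (rule sum.cong[OF refl]) (simp add: uh colidx)
    finally have s0: "(\<Sum>b\<in>Bx. fscale (u b) b) = 0" using lc by simp
    obtain i0 where i0: "i0 < k" "y i0 \<noteq> 0" using y(1) by blast
    have "u (h i0) = 0" by (rule fs.independentD[OF Bx(2) finB order_refl s0 hB[OF i0(1)]])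
    then show False using uh[OF i0(1)] i0(2) by simp
  qed
  define V where "V = U \<inter> dG -` (- {0})"
  have Vo: "openin (top_of_set (rvec n)) V"
  proof (rule openin_trans[OF _ Uo])
    show "openin (top_of_set U) V" unfolding V_def
      by (rule continuous_openin_preimage_gen[OF cdet]) auto
  qed
  define c where "c r i j = (\<Sum>i'<k. aG r i i' * (\<Sum>p<l. A r p (idx i') * A r p j)) / dG r" for r i j
  have cc: "\<forall>i<k. \<forall>j<n. continuous_on V (\<lambda>r. c r i j)"
  proof (intro allI impI)
    fix i j assume i: "i < k" and j: "j < n"
    have VU: "V \<subseteq> U" by (auto simp: V_def)
    have "continuous_on U (\<lambda>r. \<Sum>i'<k. aG r i i' * (\<Sum>p<l. A r p (idx i') * A r p j))"
      using cadj i Ac idx_lt j by (auto intro!: continuous_intros)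
    then show "continuous_on V (\<lambda>r. c r i j)" unfolding c_def
      by (intro continuous_on_divide continuous_on_subset[OF _ VU] cdet) (auto simp: V_def)
  qed
  have fr: "frame n l k idx (A r) (c r)" if r: "r \<in> V" for r
  proof -
    have rU: "r \<in> U" and d: "dG r \<noteq> 0" using r by (auto simp: V_def)
    have rkr: "fs.dim (colv l (A r) ` {..<n}) = k"
      using rk rU x Bx(4) by (simp add: k_def rank_colv)
    have a1: "(\<Sum>j<k. (\<Sum>p<l. A r p (idx i) * A r p (idx j)) * aG r j i') = (if i = i' then dG r else 0)"
      if "i < k" "i' < k" for i i'
      using GJ(3)[OF that, of r] by (simp add: g_def)
    have a2: "(\<Sum>j<k. aG r i j * (\<Sum>p<l. A r p (idx j) * A r p (idx i'))) = (if i = i' then dG r else 0)"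
      if "i < k" "i' < k" for i i'
      using GJ(4)[OF that, of r] by (simp add: g_def)
    have "c r = (\<lambda>i j. (\<Sum>i'<k. aG r i i' * (\<Sum>p<l. A r p (idx i') * A r p j)) / dG r)"
      by (simp add: c_def fun_eq_iff)
    then show ?thesis using frame_from_gram[OF idx_lt idx_inj a1 a2 d rkr] by simp
  qed
  show ?thesis
    by (rule exI[of _ V], rule exI[of _ k], rule exI[of _ idx], rule exI[of _ c])
       (use Vo x dx cc fr in \<open>auto simp: V_def\<close>)
qed

theorem proposition1:
  fixes n m l :: nat
    and U :: "(nat \<Rightarrow> real) set"
    and A B :: "(nat \<Rightarrow> real) \<Rightarrow> nat \<Rightarrow> nat \<Rightarrow> real"
  assumes "U \<subseteq> rvec n"
    and "openin (top_of_set (rvec n)) U"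
    and "\<forall>i<l. \<forall>j<n. continuous_on U (\<lambda>r. A r i j)"
    and "\<forall>i<n. \<forall>j<m. continuous_on U (\<lambda>r. B r i j)"
    and "\<exists>k. \<forall>r\<in>U. mat_rank l n (A r) = k"
  shows "modulated_dirac n (3*n+m) U (Dpos n m l A B)"
proof -
  obtain k0 where rk: "\<forall>r\<in>U. mat_rank l n (A r) = k0" using assms(5) by blast
  show ?thesis unfolding modulated_dirac_def
  proof
    fix x assume x: "x \<in> U"
    obtain V k idx c where V: "openin (top_of_set (rvec n)) V" "x \<in> V" "V \<subseteq> U"
      and cc: "\<forall>i<k. \<forall>j<n. continuous_on V (\<lambda>r. c r i j)"
      and fr: "\<forall>r\<in>V. frame n l k idx (A r) (c r)"
      using local_frame[OF assms(2) assms(3) rk x] by blast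
    have frx: "frame n l k idx (A x) (c x)" using fr V(2) by blast
    have dir: "dirac (3*n+m) (Dpos n m l A B x)"
      by (rule dirac_D) (use frame.orth_compl[OF frx] in blast)
    have lb: "\<forall>y\<in>V. lin_bij_onto (3*n+m) (Tmap n m k idx (c y) (B y)) (Dpos n m l A B y)"
    proof
      fix y assume "y \<in> V"
      then have "frame n l k idx (A y) (c y)" using fr by blast
      then show "lin_bij_onto (3*n+m) (Tmap n m k idx (c y) (B y)) (Dpos n m l A B y)"
        by (rule frame.T_lin_bij) (rule refl)
    qed
    have Bc: "\<forall>i<n. \<forall>j<m. continuous_on V (\<lambda>r. B r i j)"
      using assms(4) V(3) by (auto intro: continuous_on_subset)
    have ct: "\<forall>z\<in>rvec (3*n+m). continuous_on V (\<lambda>y. Tmap n m k idx (c y) (B y) z)"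
      using cont_Tmap[OF cc Bc] by simp
    show "dirac (3*n+m) (Dpos n m l A B x) \<and>
        (\<exists>Ux T. openin (top_of_set (rvec n)) Ux \<and> x \<in> Ux \<and> Ux \<subseteq> U \<and>
           (\<forall>y\<in>Ux. lin_bij_onto (3*n+m) (T y) (Dpos n m l A B y)) \<and>
           (\<forall>z\<in>rvec (3*n+m). continuous_on Ux (\<lambda>y. T y z)))"
      apply (rule conjI[OF dir])
      apply (rule exI[of _ V], rule exI[of _ "\<lambda>y. Tmap n m k idx (c y) (B y)"])
      using V lb ct by simp
  qed
qed

end
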